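(* Let $A$ be a finite alphabet and $x\in A^{\mathbb N}$ an infinite word. Then there exists a quasiperiodic infinite word $y$ (over some finite alphabet) that is complexity equivalent to $x$, i.e. there is a positive integer $K$ such that for all $n\geq 1$, $p_n(x)\leq K\,p_{Kn}(y)$ and $p_n(y)\leq K\,p_{Kn}(x)$. *)

theory Defs
  imports Main
begin

definition factor :: "(nat \<Rightarrow> 'a) \<Rightarrow> nat \<Rightarrow> nat \<Rightarrow> 'a list" where
  "factor x k n = map (\<lambda>i. x (k + i)) [0..<n]"

definition complexity :: "(nat \<Rightarrow> 'a) \<Rightarrow> nat \<Rightarrow> nat" where
  "complexity x n = card {factor x k n | k. True}"

definition occurs_at :: "'a list \<Rightarrow> (nat \<Rightarrow> 'a) \<Rightarrow> nat \<Rightarrow> bool" where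
  "occurs_at q x j \<longleftrightarrow> factor x j (length q) = q"

definition quasiperiodic :: "(nat \<Rightarrow> 'a) \<Rightarrow> bool" where
  "quasiperiodic y \<longleftrightarrow> (\<exists>q. q \<noteq> [] \<and>
     (\<forall>i. \<exists>j. j \<le> i \<and> i < j + length q \<and> occurs_at q y j))"

end

theory Submission imports Defs begin

lemma factors_finite:
  assumes "finite (range x)"
  shows "finite {factor x k n | k. True}"
proof -
  have "{factor x k n | k. True} \<subseteq> {xs. set xs \<subseteq> range x \<and> length xs = n}"
    by (auto simp: factor_def)
  moreover have "finite {xs. set xs \<subseteq> range x \<and> length xs = n}"
    using finite_lists_length_eq[OF assms] by simp
  ultimately show ?thesis by (rule finite_subset)
qed

lemma complexity_mono:
  assumes "finite (range x)" "n \<le> m"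
  shows "complexity x n \<le> complexity x m"
proof -
  have "{factor x k n | k. True} = take n ` {factor x k m | k. True}"
  proof -
    have "take n (factor x k m) = factor x k n" for k
      using assms(2) by (simp add: factor_def take_map min_def)
    then have "take n ` range (\<lambda>k. factor x k m) = range (\<lambda>k. factor x k n)"
      by (simp add: image_image)
    moreover have "\<And>j. {factor x k j | k. True} = range (\<lambda>k. factor x k j)" by auto
    ultimately show ?thesis by simp
  qed
  then show ?thesis unfolding complexity_def
    using card_image_le[OF factors_finite[OF assms(1)]] by metis
qed

lemma compl_upper:
  assumes fin: "finite (range x)" and L: "L > 0"
    and y: "\<And>p. y p = F (x (p div L)) (p mod L)"
  shows "complexity y n \<le> L * complexity x (n+1)"
proof -
  define G where "G = (\<lambda>(r::nat, u). map (\<lambda>i. F (u ! ((r+i) div L)) ((r+i) mod L)) [0..<n])"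
  have sub: "{factor y j n | j. True} \<subseteq> G ` ({..<L} \<times> {factor x k (n+1) | k. True})"
  proof
    fix w assume "w \<in> {factor y j n | j. True}"
    then obtain j where w: "w = factor y j n" by blast
    define k r where "k = j div L" and "r = j mod L"
    have j: "j = L * k + r" and rL: "r < L" using L by (auto simp: k_def r_def)
    have "w = G (r, factor x k (n+1))"
    proof -
      have "(r + i) div L < n + 1" if "i < n" for i
      proof -
        have "r + i < L * (n+1)" using rL that L
        proof -
          have "L * (n+1) = L*n + L" by simp
          moreover have "i \<le> L*n" proof -
            have "n \<le> L * n" using L by simp
            then show ?thesis using that by linarith
          qed
          ultimately show ?thesis using rL by linarith
        qed
        then show ?thesis using less_mult_imp_div_less[of "r+i" "n+1" L] by (simp add: mult.commute)
      qed
      moreover have "y (j + i) = F (x (k + (r+i) div L)) ((r+i) mod L)" for i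
        using y[of "j+i"] j L by (simp add: add.assoc)
      ultimately show ?thesis unfolding w G_def factor_def
        by (auto simp del: upt_Suc simp: add.assoc)
    qed
    then show "w \<in> G ` ({..<L} \<times> {factor x k (n+1) | k. True})" using rL by blast
  qed
  have "complexity y n \<le> card (G ` ({..<L} \<times> {factor x k (n+1) | k. True}))"
    unfolding complexity_def
    by (rule card_mono[OF _ sub]) (intro finite_imageI finite_cartesian_product finite_lessThan factors_finite fin)
  also have "\<dots> \<le> card ({..<L} \<times> {factor x k (n+1) | k. True})"
    by (rule card_image_le) (intro finite_cartesian_product finite_lessThan factors_finite fin)
  also have "\<dots> = L * complexity x (n+1)" by (simp add: card_cartesian_product complexity_def)
  finally show ?thesis .
qed

lemma compl_lower:
  assumes fin: "finite (range y)" and L: "L > 0"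
    and y: "\<And>p. y p = F (x (p div L)) (p mod L)"
    and inj: "\<And>a b. a \<in> range x \<Longrightarrow> b \<in> range x \<Longrightarrow> (\<forall>r<L. F a r = F b r) \<Longrightarrow> a = b"
  shows "complexity x n \<le> complexity y (L * n)"
proof -
  have key: "factor x k n = factor x k' n" if eq: "factor y (L*k) (L*n) = factor y (L*k') (L*n)" for k k'
  proof -
    have "x (k+i) = x (k'+i)" if i: "i < n" for i
    proof (rule inj, simp, simp, intro allI impI)
      fix r assume r: "r < L"
      have "L*i + r < L*n" using i r
      proof -
        have "L*i + r < L*i + L" using r by simp
        also have "\<dots> = L * Suc i" by simp
        also have "\<dots> \<le> L*n" using i by (intro mult_le_mono2) simp
        finally show ?thesis .
      qed
      then have "factor y (L*k) (L*n) ! (L*i+r) = factor y (L*k') (L*n) ! (L*i+r)" using eq by simp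
      then have "y (L*k + (L*i+r)) = y (L*k' + (L*i+r))" using \<open>L*i + r < L*n\<close> by (simp add: factor_def)
      moreover have "y (L*k + (L*i+r)) = F (x (k+i)) r" "y (L*k' + (L*i+r)) = F (x (k'+i)) r"
      proof -
        have "L*k + (L*i+r) = r + L*(k+i)" "L*k' + (L*i+r) = r + L*(k'+i)" by (simp_all add: algebra_simps)
        then show "y (L*k + (L*i+r)) = F (x (k+i)) r" "y (L*k' + (L*i+r)) = F (x (k'+i)) r"
          using y r L by simp_all
      qed
      ultimately show "F (x (k+i)) r = F (x (k'+i)) r" by simp
    qed
    then show ?thesis by (simp add: factor_def)
  qed
  define T' where "T' = {factor y (L*k) (L*n) | k. True}"
  define \<phi> where "\<phi> = (\<lambda>w. SOME u. \<exists>k. w = factor y (L*k) (L*n) \<and> u = factor x k n)"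
  have phi: "\<phi> (factor y (L*k) (L*n)) = factor x k n" for k
  proof -
    have "\<exists>k'. factor y (L*k) (L*n) = factor y (L*k') (L*n) \<and> \<phi> (factor y (L*k) (L*n)) = factor x k' n"
      unfolding \<phi>_def by (rule someI_ex) blast
    then show ?thesis using key by metis
  qed
  have "T' = range (\<lambda>k. factor y (L*k) (L*n))" unfolding T'_def by auto
  then have "\<phi> ` T' = range (\<lambda>k. factor x k n)" by (simp add: image_image phi)
  moreover have "{factor x k n | k. True} = range (\<lambda>k. factor x k n)" by auto
  ultimately have eqS: "{factor x k n | k. True} = \<phi> ` T'" by simp
  have finT: "finite T'" unfolding T'_def
    by (rule finite_subset[OF _ factors_finite[OF fin, of "L*n"]]) blast
  have "complexity x n \<le> card T'" unfolding complexity_def eqS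
    by (rule card_image_le[OF finT])
  also have "card T' \<le> complexity y (L*n)" unfolding complexity_def T'_def
    by (rule card_mono[OF factors_finite[OF fin]]) blast
  finally show ?thesis .
qed

lemma qp_from_segs:
  assumes seg: "\<And>p. \<exists>st M. st \<le> p \<and> p < st + M \<and> odd M \<and> M \<ge> 3 \<and>
      (\<forall>e<M. y (st+e) = (if odd e then 1 else (0::nat)))"
  shows "quasiperiodic y"
  unfolding quasiperiodic_def
proof (intro exI[of _ "[0,1,0]"] conjI allI)
  show "[0,1,0::nat] \<noteq> []" by simp
  fix p
  obtain st M where h: "st \<le> p" "p < st + M" "odd M" "M \<ge> 3"
    "\<forall>e<M. y (st+e) = (if odd e then 1 else (0::nat))" using seg by blast
  have occ: "occurs_at [0,1,0] y (st+e)" if "even e" "e + 2 < M" for e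
  proof -
    have "y (st+e) = 0" "y (st+(e+1)) = 1" "y (st+(e+2)) = 0"
      using h(5) that spec[OF h(5), of e] spec[OF h(5), of "e+1"] spec[OF h(5), of "e+2"] by auto
    then show ?thesis by (simp add: occurs_at_def factor_def upt_rec add.assoc)
  qed
  define s where "s = p - st"
  have ps: "p = st + s" "s < M" using h s_def by auto
  show "\<exists>j\<le>p. p < j + length [0,1,0::nat] \<and> occurs_at [0,1,0] y j"
  proof (cases "odd s")
    case True
    then have "even (s-1)" "s - 1 + 2 < M" using ps h(3) by (auto, presburger)
    then show ?thesis using occ[of "s-1"] ps True by (intro exI[of _ "st+(s-1)"]) (auto simp: odd_pos)
  next
    case False
    show ?thesis
    proof (cases "s + 2 < M")
      case True
      then show ?thesis using occ[of s] ps False by (intro exI[of _ "st+s"]) auto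
    next
      case f2: False
      then have "s = M - 1" using ps h(3) False by presburger
      then have "even (s-2)" "s - 2 + 2 < M" "s \<ge> 2" using ps h(3,4) False by auto
      then show ?thesis using occ[of "s-2"] ps by (intro exI[of _ "st+(s-2)"]) auto
    qed
  qed
qed

theorem mainTheorem1:
  fixes A :: "'a set" and x :: "nat \<Rightarrow> 'a"
  assumes "finite A" and "\<forall>i. x i \<in> A"
  shows "\<exists>y :: nat \<Rightarrow> nat. finite (range y) \<and> quasiperiodic y \<and>
           (\<exists>K::nat. K > 0 \<and> (\<forall>n\<ge>1. complexity x n \<le> K * complexity y (K * n)
                                    \<and> complexity y n \<le> K * complexity x (K * n)))"
proof -
  obtain idx :: "'a \<Rightarrow> nat" and N where idxA: "idx ` A = {i. i < N}" and inj: "inj_on idx A"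
    using finite_imp_inj_to_nat_seg[OF assms(1)] by blast
  define L where "L = 2*N+6"
  define F where "F = (\<lambda>a r. let m = 2 * idx a + 3 in
     if r < m then (if odd r then 1 else 0) else (if odd (r - m) then 1 else (0::nat)))"
  define y where "y = (\<lambda>p. F (x (p div L)) (p mod L))"
  have L0: "L > 0" by (simp add: L_def)
  have yF: "\<And>p. y p = F (x (p div L)) (p mod L)" by (simp add: y_def)
  have idxlt: "idx (x k) < N" for k using idxA assms(2) by blast
  have finx: "finite (range x)" using assms by (metis finite_subset image_subsetI)
  have finy: "finite (range y)"
  proof -
    have "range y \<subseteq> {0,1}" by (auto simp: y_def F_def Let_def)
    then show ?thesis by (rule finite_subset) simp
  qed
  have Finj: "a = b" if "a \<in> range x" "b \<in> range x" "\<forall>r<L. F a r = F b r" for a b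
  proof -
    have ab: "idx a < N" "idx b < N" using that(1,2) idxlt by auto
    have "idx a = idx b"
    proof (rule ccontr)
      assume ne: "idx a \<noteq> idx b"
      have *: False if "idx u < idx v" "idx u < N" "idx v < N" "\<forall>r<L. F u r = F v r" for u v
      proof -
        have "2 * idx u + 3 < L" using that L_def by simp
        then have "F u (2 * idx u + 3) = F v (2 * idx u + 3)" using that(4) by blast
        then show False using that(1) by (simp add: F_def Let_def)
      qed
      show False
      proof (cases "idx a < idx b")
        case True then show ?thesis using * ab that(3) by blast
      next
        case False then have "idx b < idx a" using ne by simp
        then show ?thesis using *[of b a] ab that(3) by (metis)
      qed
    qed
    then show ?thesis using inj that(1,2) assms(2) by (auto simp: inj_on_def)
  qed
  have seg: "\<exists>st M. st \<le> p \<and> p < st + M \<and> odd M \<and> M \<ge> 3 \<and>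
      (\<forall>e<M. y (st+e) = (if odd e then 1 else (0::nat)))" for p
  proof -
    define k r where "k = p div L" and "r = p mod L"
    have p: "p = L*k + r" and rL: "r < L" using L0 by (auto simp: k_def r_def)
    define m where "m = 2 * idx (x k) + 3"
    have mL: "m < L" using idxlt[of k] by (simp add: m_def L_def)
    have ydec: "y (L*k + t) = F (x k) t" if "t < L" for t
      using that L0 by (simp add: y_def)
    show ?thesis
    proof (cases "r < m")
      case True
      have "\<forall>e<m. y (L*k+e) = (if odd e then 1 else 0)"
      proof (intro allI impI)
        fix e assume "e < m"
        then show "y (L*k+e) = (if odd e then 1 else 0)" using ydec[of e] mL
          by (simp add: F_def Let_def m_def)
      qed
      moreover have "L*k \<le> p" "p < L*k + m" "odd m" "m \<ge> 3" using p True by (auto simp: m_def)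
      ultimately show ?thesis by blast
    next
      case False
      have "\<forall>e<L-m. y (L*k+m+e) = (if odd e then 1 else 0)"
      proof (intro allI impI)
        fix e assume "e < L - m"
        then show "y (L*k + m + e) = (if odd e then 1 else 0)" using ydec[of "m+e"] mL
          by (simp add: F_def Let_def m_def add.assoc)
      qed
      moreover have "L*k + m \<le> p" "p < L*k + m + (L - m)" "odd (L-m)" "L - m \<ge> 3"
        using p False rL idxlt[of k] by (auto simp: m_def L_def)
      ultimately show ?thesis by blast
    qed
  qed
  have qp: "quasiperiodic y" by (rule qp_from_segs[OF seg])
  show ?thesis
  proof (intro exI[of _ y] conjI exI[of _ L] allI impI finy qp L0)
    fix n :: nat assume n: "n \<ge> 1"
    show "complexity x n \<le> L * complexity y (L * n)"
    proof -
      have "complexity x n \<le> complexity y (L * n)"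
        by (rule compl_lower[where x=x and L=L and y=y and F=F, OF finy L0 yF Finj])
      also have "\<dots> \<le> L * complexity y (L * n)" using L0 by simp
      finally show ?thesis .
    qed
    have "complexity y n \<le> L * complexity x (n+1)" by (rule compl_upper[where x=x and L=L and y=y and F=F, OF finx L0 yF])
    also have "\<dots> \<le> L * complexity x (L*n)"
    proof -
      have "L * n = (2*N+5) * n + n" by (simp add: L_def algebra_simps)
      moreover have "1 \<le> (2*N+5) * n" using n by simp
      ultimately have "n + 1 \<le> L * n" by linarith
      then show ?thesis using complexity_mono[OF finx] by simp
    qed
    finally show "complexity y n \<le> L * complexity x (L * n)" .
  qed
qed

end
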